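(* Under the setting and hypotheses of the convergence theorem stated in the context (existence of a valid solution $\boldsymbol{x}^\star$ and priors satisfying $1\ge q_v>1-\epsilon_v$ if $\mathtt{x}^\star_v=0$, $0\le q_v<\epsilon_v$ if $\mathtt{x}^\star_v=1$), after the first BP iteration $$\mathsf{r}^{(1)}_v(\mathtt{x}^\star_v)>\mathsf{r}^{(1)}_v(1-\mathtt{x}^\star_v)\quad\text{for all } v\in\mathcal{V},$$ i.e., $\widehat{x}^{(1)}_v=\mathtt{x}^\star_v$ for all $v\in\mathcal{V}$.
   Context: Factor graph: a finite set $\mathcal{V}$ of binary variables $x_v\in\{0,1\}$ and a finite set $\mathcal{J}$ of factors; each factor $J$ has a nonempty neighborhood $\mathcal{V}_J\subseteq\mathcal{V}$ and a function $\mathsf{g}_J:\{0,1\}^{|\mathcal{V}_J|}\to\{0,1\}$. For $v\in\mathcal{V}$, $\mathcal{J}_v=\{J: v\in\mathcal{V}_J\}$, assumed nonempty. A valid solution is $\boldsymbol{x}^\star\in\{0,1\}^{\mathcal{V}}$ with $\mathsf{g}_J(\boldsymbol{x}^\star_{\mathcal{V}_J})=1$ for all $J$. Define $\kappa_v=\max_{J\in\mathcal{J}_v}|\{\mathbf{x}_{\mathcal{V}_J}:\mathsf{g}_J(\mathbf{x}_{\mathcal{V}_J})=1\}|$ and $\epsilon_v=1/(1+\kappa_v^{|\mathcal{J}_v|})$. BP: priors $\mathrm{P}_v(0)=q_v$, $\mathrm{P}_v(1)=1-q_v$; $\mathsf{m}^{(0)}_{v\to J}(0)=q_v$, $\mathsf{m}^{(0)}_{v\to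 J}(1)=1-q_v$; for $n\ge1$, $\mathsf{m}^{(n)}_{J\to v}(x)=\mathtt{C}^{(n)}_{J\to v}\sum_{\mathbf{x}_{\mathcal{V}_J\setminus v}}\mathsf{g}_J(\mathbf{x}_{\mathcal{V}_J\setminus v},x_v=x)\prod_{y\in\mathcal{V}_J\setminus v}\mathsf{m}^{(n-1)}_{y\to J}(x_y)$ and $\mathsf{m}^{(n)}_{v\to J}(x)=\mathtt{C}^{(n)}_{v\to J}\mathrm{P}_v(x)\prod_{I\in\mathcal{J}_v\setminus J}\mathsf{m}^{(n)}_{I\to v}(x)$, with positive normalizing constants making $\mathsf{m}(0)+\mathsf{m}(1)=1$. Marginals $\mathsf{r}^{(n)}_v(x)=\mathrm{P}_v(x)\prod_{J\in\mathcal{J}_v}\mathsf{m}^{(n)}_{J\to v}(x)$; decision $\widehat{x}^{(n)}_v=\mathsf{1}\{\mathsf{r}^{(n)}_v(1)\ge\mathsf{r}^{(n)}_v(0)\}$. *)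

theory Defs
  imports Main "HOL-Library.FuncSet" Complex_Main
begin

text \<open>Factor graph: variable set V (type 'v), factor set FJ (type 'j),
  neighbourhoods N J, factor functions g J acting on local configurations
  (functions in PiE (N J) (\<lambda>_. {0,1})) with values in {0,1}.\<close>

definition loc :: "('j \<Rightarrow> 'v set) \<Rightarrow> 'j \<Rightarrow> ('v \<Rightarrow> nat) set" where
  "loc N J = PiE (N J) (\<lambda>_. {0,1})"

definition factors_of :: "'j set \<Rightarrow> ('j \<Rightarrow> 'v set) \<Rightarrow> 'v \<Rightarrow> 'j set" where
  "factors_of FJ N v = {J \<in> FJ. v \<in> N J}"

definition kappa :: "'j set \<Rightarrow> ('j \<Rightarrow> 'v set) \<Rightarrow> ('j \<Rightarrow> ('v \<Rightarrow> nat) \<Rightarrow> nat) \<Rightarrow> 'v \<Rightarrow> nat" where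
  "kappa FJ N g v = Max ((\<lambda>J. card {x \<in> loc N J. g J x = 1}) ` factors_of FJ N v)"

definition eps :: "'j set \<Rightarrow> ('j \<Rightarrow> 'v set) \<Rightarrow> ('j \<Rightarrow> ('v \<Rightarrow> nat) \<Rightarrow> nat) \<Rightarrow> 'v \<Rightarrow> real" where
  "eps FJ N g v = 1 / (1 + real (kappa FJ N g v) ^ card (factors_of FJ N v))"

definition prior :: "('v \<Rightarrow> real) \<Rightarrow> 'v \<Rightarrow> nat \<Rightarrow> real" where
  "prior q v x = (if x = 0 then q v else 1 - q v)"

definition msg0_vJ :: "('v \<Rightarrow> real) \<Rightarrow> 'v \<Rightarrow> 'j \<Rightarrow> nat \<Rightarrow> real" where
  "msg0_vJ q v J x = prior q v x"

definition fsum1 :: "('j \<Rightarrow> 'v set) \<Rightarrow> ('j \<Rightarrow> ('v \<Rightarrow> nat) \<Rightarrow> nat) \<Rightarrow> ('v \<Rightarrow> real)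
    \<Rightarrow> 'j \<Rightarrow> 'v \<Rightarrow> nat \<Rightarrow> real" where
  "fsum1 N g q J v x =
     (\<Sum>x' \<in> PiE (N J - {v}) (\<lambda>_. {0,1}).
        real (g J (x'(v := x))) * (\<Prod>y \<in> N J - {v}. msg0_vJ q y J (x' y)))"

definition msg1_Jv :: "('j \<Rightarrow> 'v set) \<Rightarrow> ('j \<Rightarrow> ('v \<Rightarrow> nat) \<Rightarrow> nat) \<Rightarrow> ('v \<Rightarrow> real)
    \<Rightarrow> 'j \<Rightarrow> 'v \<Rightarrow> nat \<Rightarrow> real" where
  "msg1_Jv N g q J v x = fsum1 N g q J v x / (fsum1 N g q J v 0 + fsum1 N g q J v 1)"

definition marg1 :: "'j set \<Rightarrow> ('j \<Rightarrow> 'v set) \<Rightarrow> ('j \<Rightarrow> ('v \<Rightarrow> nat) \<Rightarrow> nat) \<Rightarrow> ('v \<Rightarrow> real)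
    \<Rightarrow> 'v \<Rightarrow> nat \<Rightarrow> real" where
  "marg1 FJ N g q v x = prior q v x * (\<Prod>J \<in> factors_of FJ N v. msg1_Jv N g q J v x)"

definition dec1 :: "'j set \<Rightarrow> ('j \<Rightarrow> 'v set) \<Rightarrow> ('j \<Rightarrow> ('v \<Rightarrow> nat) \<Rightarrow> nat) \<Rightarrow> ('v \<Rightarrow> real)
    \<Rightarrow> 'v \<Rightarrow> nat" where
  "dec1 FJ N g q v = (if marg1 FJ N g q v 1 \<ge> marg1 FJ N g q v 0 then 1 else 0)"

end

theory Submission
  imports Defs
begin

theorem lemma1:
  fixes V :: "'v set" and FJ :: "'j set" and N :: "'j \<Rightarrow> 'v set"
    and g :: "'j \<Rightarrow> ('v \<Rightarrow> nat) \<Rightarrow> nat" and q :: "'v \<Rightarrow> real"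
    and xs :: "'v \<Rightarrow> nat"
  assumes finV: "finite V" and finJ: "finite FJ"
    and nbhd: "\<And>J. J \<in> FJ \<Longrightarrow> N J \<noteq> {} \<and> N J \<subseteq> V"
    and g01: "\<And>J x. J \<in> FJ \<Longrightarrow> x \<in> loc N J \<Longrightarrow> g J x \<in> {0, 1}"
    and Jv_ne: "\<And>v. v \<in> V \<Longrightarrow> factors_of FJ N v \<noteq> {}"
    and xs01: "\<And>v. v \<in> V \<Longrightarrow> xs v \<in> {0, 1}"
    and valid: "\<And>J. J \<in> FJ \<Longrightarrow> g J (restrict xs (N J)) = 1"
    and q0: "\<And>v. v \<in> V \<Longrightarrow> xs v = 0 \<Longrightarrow> q v \<le> 1 \<and> q v > 1 - eps FJ N g v"
    and q1: "\<And>v. v \<in> V \<Longrightarrow> xs v = 1 \<Longrightarrow> 0 \<le> q v \<and> q v < eps FJ N g v"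
  shows "\<forall>v \<in> V. marg1 FJ N g q v (xs v) > marg1 FJ N g q v (1 - xs v)
                \<and> dec1 FJ N g q v = xs v"
proof
  fix v assume vV: "v \<in> V"
  have finF: "finite (factors_of FJ N u)" for u unfolding factors_of_def using finJ by simp
  define sat where "sat J = {x \<in> loc N J. g J x = 1}" for J
  have finN: "finite (N J)" if "J \<in> FJ" for J using nbhd[OF that] finV finite_subset by blast
  have finsat: "finite (sat J)" if "J \<in> FJ" for J
    unfolding sat_def loc_def using finN[OF that] by (simp add: finite_PiE)
  have xs_sat: "restrict xs (N J) \<in> sat J" if "J \<in> FJ" for J
    unfolding sat_def loc_def using valid[OF that] nbhd[OF that] xs01
    by (auto simp: restrict_PiE_iff subset_iff)
  have kap_ge: "card (sat J) \<le> kappa FJ N g u" if "J \<in> factors_of FJ N u" for J u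
    unfolding kappa_def sat_def by (rule Max_ge) (use finF that in auto)
  have kap1: "1 \<le> kappa FJ N g u" if uV: "u \<in> V" for u
  proof -
    obtain J where J: "J \<in> factors_of FJ N u" using Jv_ne[OF uV] by blast
    then have JF: "J \<in> FJ" unfolding factors_of_def by auto
    have "card (sat J) \<ge> 1" using finsat[OF JF] xs_sat[OF JF]
      by (metis One_nat_def Suc_leI card_gt_0_iff empty_iff)
    then show ?thesis using kap_ge[OF J] by linarith
  qed
  have eps_le: "eps FJ N g u \<le> 1/2" if "u \<in> V" for u
  proof -
    have "1 \<le> real (kappa FJ N g u) ^ card (factors_of FJ N u)"
      using kap1[OF that] by (simp add: one_le_power)
    then show ?thesis unfolding eps_def by (simp add: divide_simps)
  qed
  have eps_eq: "eps FJ N g u * real (kappa FJ N g u) ^ card (factors_of FJ N u) = 1 - eps FJ N g u" for u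
  proof -
    have "0 \<le> real (kappa FJ N g u) ^ card (factors_of FJ N u)" by simp
    then have "1 + real (kappa FJ N g u) ^ card (factors_of FJ N u) \<noteq> 0" by linarith
    then show ?thesis unfolding eps_def by (simp add: field_simps)
  qed
  have pr: "prior q u (xs u) > 1/2 \<and> prior q u (1 - xs u) \<ge> 0 \<and> prior q u (1 - xs u) < 1/2
      \<and> prior q u (xs u) \<le> 1 \<and> prior q u (1 - xs u) < eps FJ N g u \<and> prior q u (xs u) > 1 - eps FJ N g u"
    if "u \<in> V" for u
    using xs01[OF that] q0[OF that] q1[OF that] eps_le[OF that]
    by (auto simp: prior_def)
  have pr_le: "0 \<le> prior q u x \<and> prior q u x \<le> prior q u (xs u)" if "u \<in> V" "x \<in> {0,1}" for u x
  proof -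
    have "x = xs u \<or> x = 1 - xs u" using that xs01[OF that(1)] by auto
    then show ?thesis using pr[OF that(1)] by auto
  qed
  define a where "a = xs v"
  define b where "b = 1 - xs v"
  have a01: "a \<in> {0,1}" and b01: "b \<in> {0,1}" using xs01[OF vV] by (auto simp: a_def b_def)
  define K where "K = real (kappa FJ N g v)"
  have perJ: "msg1_Jv N g q J v a > 0 \<and> msg1_Jv N g q J v b \<le> K * msg1_Jv N g q J v a \<and> 0 \<le> msg1_Jv N g q J v b"
    if J: "J \<in> factors_of FJ N v" for J
  proof -
    have JF: "J \<in> FJ" and vJ: "v \<in> N J" using J unfolding factors_of_def by auto
    have NV: "N J \<subseteq> V" using nbhd[OF JF] by auto
    define P where "P = PiE (N J - {v}) (\<lambda>_. {0::nat,1})"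
    have finP: "finite P" unfolding P_def using finN[OF JF] by (simp add: finite_PiE)
    define T where "T = (\<Prod>y \<in> N J - {v}. prior q y (xs y))"
    have Tpos: "T > 0" unfolding T_def
      by (rule prod_pos) (use pr NV in force)
    have upd: "x'(v := c) \<in> loc N J" if "x' \<in> P" "c \<in> {0,1}" for x' c
      using that vJ unfolding P_def loc_def by (auto simp: PiE_iff extensional_def)
    have prodnn: "0 \<le> (\<Prod>y \<in> N J - {v}. msg0_vJ q y J (x' y))"
      and prodle: "(\<Prod>y \<in> N J - {v}. msg0_vJ q y J (x' y)) \<le> T" if "x' \<in> P" for x'
    proof -
      have h: "0 \<le> prior q y (x' y) \<and> prior q y (x' y) \<le> prior q y (xs y)" if "y \<in> N J - {v}" for y
        using pr_le[of y "x' y"] that NV \<open>x' \<in> P\<close> unfolding P_def by (auto simp: PiE_iff)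
      show "0 \<le> (\<Prod>y \<in> N J - {v}. msg0_vJ q y J (x' y))"
        unfolding msg0_vJ_def by (rule prod_nonneg) (use h in auto)
      show "(\<Prod>y \<in> N J - {v}. msg0_vJ q y J (x' y)) \<le> T"
        unfolding msg0_vJ_def T_def by (rule prod_mono) (use h in auto)
    qed
    have fs: "fsum1 N g q J v c = (\<Sum>x' \<in> P. real (g J (x'(v := c))) * (\<Prod>y \<in> N J - {v}. msg0_vJ q y J (x' y)))" for c
      unfolding fsum1_def P_def by simp
    have fa: "fsum1 N g q J v a \<ge> T"
    proof -
      define x0 where "x0 = restrict xs (N J - {v})"
      have x0P: "x0 \<in> P" unfolding x0_def P_def using xs01 NV by (auto simp: restrict_PiE_iff subset_iff)
      have "x0(v := a) = restrict xs (N J)" unfolding x0_def a_def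
        using vJ by (auto simp: restrict_def)
      then have g1: "g J (x0(v := a)) = 1" using valid[OF JF] by simp
      have pe: "(\<Prod>y \<in> N J - {v}. msg0_vJ q y J (x0 y)) = T"
        unfolding T_def msg0_vJ_def x0_def by (rule prod.cong) auto
      have "T = real (g J (x0(v := a))) * (\<Prod>y \<in> N J - {v}. msg0_vJ q y J (x0 y))"
        using g1 pe by simp
      also have "\<dots> \<le> (\<Sum>x' \<in> P. real (g J (x'(v := a))) * (\<Prod>y \<in> N J - {v}. msg0_vJ q y J (x' y)))"
        by (rule member_le_sum) (use x0P finP prodnn in auto)
      finally show ?thesis using fs by simp
    qed
    have fbnn: "fsum1 N g q J v b \<ge> 0" unfolding fs
      by (rule sum_nonneg) (use prodnn in auto)
    have fb: "fsum1 N g q J v b \<le> K * T"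
    proof -
      let ?Q = "{x' \<in> P. g J (x'(v := b)) = 1}"
      have "fsum1 N g q J v b \<le> (\<Sum>x' \<in> P. if g J (x'(v := b)) = 1 then T else 0)"
        unfolding fs
      proof (rule sum_mono)
        fix x' assume x': "x' \<in> P"
        have "g J (x'(v := b)) \<in> {0,1}" using g01[OF JF upd[OF x' b01]] .
        then show "real (g J (x'(v := b))) * (\<Prod>y \<in> N J - {v}. msg0_vJ q y J (x' y))
             \<le> (if g J (x'(v := b)) = 1 then T else 0)"
          using prodle[OF x'] by auto
      qed
      also have "\<dots> = (\<Sum>x' \<in> ?Q. T)" by (rule sum.inter_filter[OF finP, symmetric])
      also have "\<dots> = real (card ?Q) * T" by simp
      finally have s1: "fsum1 N g q J v b \<le> real (card ?Q) * T" .
      have "card ?Q \<le> card (sat J)"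
      proof (rule card_inj_on_le[where f = "\<lambda>x'. x'(v := b)"])
        show "inj_on (\<lambda>x'. x'(v := b)) ?Q"
        proof (rule inj_onI)
          fix x1 x2 assume h: "x1 \<in> ?Q" "x2 \<in> ?Q" "x1(v := b) = x2(v := b)"
          show "x1 = x2"
          proof
            fix y show "x1 y = x2 y"
            proof (cases "y = v")
              case True
              then have "y \<notin> N J - {v}" by simp
              have "x1 \<in> P" "x2 \<in> P" using h(1,2) by auto
              then have "x1 y = undefined" "x2 y = undefined"
                using PiE_arb[OF _ \<open>y \<notin> N J - {v}\<close>] unfolding P_def by blast+
              then show ?thesis by simp
            next
              case False then show ?thesis using fun_cong[OF h(3), of y] by simp
            qed
          qed
        qed
        show "(\<lambda>x'. x'(v := b)) ` ?Q \<subseteq> sat J"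
        proof
          fix z assume "z \<in> (\<lambda>x'. x'(v := b)) ` ?Q"
          then obtain x' where "x' \<in> P" "g J (x'(v := b)) = 1" "z = x'(v := b)" by blast
          then show "z \<in> sat J" unfolding sat_def using upd[OF \<open>x' \<in> P\<close> b01] by simp
        qed
        show "finite (sat J)" by (rule finsat[OF JF])
      qed
      then have "real (card ?Q) * T \<le> K * T" using kap_ge[OF J] Tpos unfolding K_def
        by (intro mult_right_mono) auto
      with s1 show ?thesis by linarith
    qed
    have Z: "fsum1 N g q J v 0 + fsum1 N g q J v 1 = fsum1 N g q J v a + fsum1 N g q J v b"
      using xs01[OF vV] unfolding a_def b_def by auto
    have Zpos: "fsum1 N g q J v a + fsum1 N g q J v b > 0" using fa fbnn Tpos by linarith
    have m: "msg1_Jv N g q J v c = fsum1 N g q J v c / (fsum1 N g q J v a + fsum1 N g q J v b)" for c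
      unfolding msg1_Jv_def Z ..
    have K0: "K \<ge> 0" unfolding K_def by simp
    have "fsum1 N g q J v b \<le> K * fsum1 N g q J v a"
      using fb fa K0 by (meson mult_left_mono order_trans)
    then show ?thesis unfolding m using Zpos fa Tpos fbnn
      by (auto simp: divide_simps)
  qed
  define M where "M = (\<Prod>J \<in> factors_of FJ N v. msg1_Jv N g q J v a)"
  have Mpos: "M > 0" unfolding M_def by (rule prod_pos) (use perJ in auto)
  have Mb: "(\<Prod>J \<in> factors_of FJ N v. msg1_Jv N g q J v b) \<le> K ^ card (factors_of FJ N v) * M"
  proof -
    have "(\<Prod>J \<in> factors_of FJ N v. msg1_Jv N g q J v b) \<le> (\<Prod>J \<in> factors_of FJ N v. K * msg1_Jv N g q J v a)"
    proof (rule prod_mono)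
      fix J assume J: "J \<in> factors_of FJ N v"
      show "0 \<le> msg1_Jv N g q J v b \<and> msg1_Jv N g q J v b \<le> K * msg1_Jv N g q J v a"
        using perJ[OF J] by simp
    qed
    also have "\<dots> = K ^ card (factors_of FJ N v) * M" unfolding M_def by (simp add: prod.distrib)
    finally show ?thesis .
  qed
  have marg: "marg1 FJ N g q v c = prior q v c * (\<Prod>J \<in> factors_of FJ N v. msg1_Jv N g q J v c)" for c
    unfolding marg1_def ..
  have pv: "prior q v a > 1 - eps FJ N g v" "prior q v b < eps FJ N g v" "prior q v b \<ge> 0"
    using pr[OF vV] unfolding a_def b_def by auto
  have KK: "eps FJ N g v * K ^ card (factors_of FJ N v) = 1 - eps FJ N g v"
    using eps_eq unfolding K_def by simp
  have K0: "K ^ card (factors_of FJ N v) \<ge> 0" unfolding K_def by simp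
  have "marg1 FJ N g q v b \<le> prior q v b * (K ^ card (factors_of FJ N v) * M)"
    unfolding marg by (rule mult_left_mono[OF Mb pv(3)])
  also have "\<dots> = (prior q v b * K ^ card (factors_of FJ N v)) * M" by simp
  also have "\<dots> \<le> (eps FJ N g v * K ^ card (factors_of FJ N v)) * M"
    using pv K0 Mpos by (intro mult_right_mono) auto
  also have "\<dots> < prior q v a * M" unfolding KK using pv Mpos by simp
  also have "\<dots> = marg1 FJ N g q v a" unfolding marg M_def ..
  finally have lt: "marg1 FJ N g q v b < marg1 FJ N g q v a" .
  show "marg1 FJ N g q v (xs v) > marg1 FJ N g q v (1 - xs v) \<and> dec1 FJ N g q v = xs v"
    using lt xs01[OF vV] unfolding a_def b_def dec1_def by auto
qed

end
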